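(* Let $p\ge1$ be an integer, $x_1,\dots,x_p\in\mathbb{R}_{\ge0}$, $\epsilon\in(0,1]$, and $\delta>0$ with $\delta\le\frac{\max_{i\in[p]}x_i}{4\epsilon^{-1}\log(2p\epsilon^{-1})}$. Let $x'_1,\dots,x'_p\in\mathbb{R}_{\ge0}$ satisfy $x_i\le x'_i\le x_i+\delta$ for all $i\in[p]$. Then $\mathrm{TV}\big(\mathrm{softargmax}^\epsilon_{i\in[p]}x_i,\ \mathrm{softargmax}^\epsilon_{i\in[p]}x'_i\big)\le\frac{10\epsilon^{-1}\log(2p\epsilon^{-1})\delta}{\max_{i\in[p]}x_i}$.
   Context: Softmax: if $\max_i x_i=0$, $\mathrm{softargmax}^\epsilon_{i\in[p]}x_i$ is an arbitrary index $i$ with $x_i=0$. Otherwise, sample $\bm c$ uniformly from $\big[\frac{2\epsilon^{-1}\log(2p\epsilon^{-1})}{\max_i x_i},\frac{4\epsilon^{-1}\log(2p\epsilon^{-1})}{\max_i x_i}\big]$, then sample $\bm i^*\in[p]$ with $\Pr[\bm i^*=i\mid\bm c]=\exp(\bm c x_i)/\sum_{i'\in[p]}\exp(\bm c x_{i'})$, and set $\mathrm{softargmax}^\epsilon_{i\in[p]}x_i=\bm i^*$ (the same procedure applied to $x'_1,\dots,x'_p$ defines $\mathrm{softargmax}^\epsilon_{i\in[p]}x'_i$). $\log$ is natural. The total variation distance of random variables $\bm X,\bm X'$ is $\mathrm{TV}(\bm X,\bm X')=\inf_{\mathcal D}\Pr_{(X,X')\sim\mathcal D}[X\neq X']$ over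 couplings $\mathcal D$. *)

theory Defs
  imports "HOL-Probability.Probability"
begin

definition softmax_prob :: "nat \<Rightarrow> (nat \<Rightarrow> real) \<Rightarrow> real \<Rightarrow> nat \<Rightarrow> real" where
  "softmax_prob p x c i = exp (c * x i) / (\<Sum>j\<in>{1..p}. exp (c * x j))"

definition sam_lo :: "nat \<Rightarrow> real \<Rightarrow> (nat \<Rightarrow> real) \<Rightarrow> real" where
  "sam_lo p \<epsilon> x = 2 * inverse \<epsilon> * ln (2 * real p * inverse \<epsilon>) / Max (x ` {1..p})"

text \<open>softargmax: if max = 0, some index with x_i = 0 (a fixed choice);
  otherwise c uniform on [sam_lo, 2 sam_lo] and then i with probability softmax_prob;
  the law of i is the mixture written out below.\<close>
definition softargmax :: "nat \<Rightarrow> real \<Rightarrow> (nat \<Rightarrow> real) \<Rightarrow> nat pmf" where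
  "softargmax p \<epsilon> x =
     (if Max (x ` {1..p}) = 0 then return_pmf (LEAST i. i \<in> {1..p} \<and> x i = 0)
      else embed_pmf (\<lambda>i. if i \<in> {1..p} then
          (1 / (2 * sam_lo p \<epsilon> x - sam_lo p \<epsilon> x)) *
            integral {sam_lo p \<epsilon> x .. 2 * sam_lo p \<epsilon> x} (\<lambda>c. softmax_prob p x c i)
        else 0))"

definition TV :: "'a pmf \<Rightarrow> 'a pmf \<Rightarrow> real" where
  "TV P Q = Inf {measure_pmf.prob D {z. fst z \<noteq> snd z} | D.
                  map_pmf fst D = P \<and> map_pmf snd D = Q}"

end

theory Submission imports Defs begin

lemma pmf_embed_finite:
  fixes f :: "'a \<Rightarrow> real"
  assumes "finite S" "\<And>x. f x \<ge> 0" "\<And>x. x \<notin> S \<Longrightarrow> f x = 0" "sum f S = 1"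
  shows "pmf (embed_pmf f) y = f y"
proof -
  have "(\<integral>\<^sup>+x. ennreal (f x) \<partial>count_space UNIV) = (\<Sum>x\<in>S. ennreal (f x))"
    by (rule nn_integral_count_space') (use assms in auto)
  also have "\<dots> = ennreal (sum f S)" using assms by (simp add: sum_ennreal)
  finally have "(\<integral>\<^sup>+x. ennreal (f x) \<partial>count_space UNIV) = 1" using assms by simp
  then show ?thesis using pmf_embed_pmf[of f] assms by blast
qed

lemma measure_pmf_finite_supp:
  assumes "finite S" "set_pmf D \<subseteq> S"
  shows "measure_pmf.prob D A = sum (pmf D) (A \<inter> S)"
proof -
  have "measure_pmf.prob D A = measure_pmf.prob D (A \<inter> S)"
    by (metis assms(2) inf.absorb_iff2 inf_assoc measure_Int_set_pmf)
  also have "\<dots> = sum (pmf D) (A \<inter> S)" using assms by (simp add: measure_measure_pmf_finite)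
  finally show ?thesis .
qed

lemma TV_le_coupling:
  fixes P Q :: "'a pmf"
  assumes S: "finite S" and PS: "\<And>i. i \<notin> S \<Longrightarrow> pmf P i = 0" and QS: "\<And>i. i \<notin> S \<Longrightarrow> pmf Q i = 0"
  shows "TV P Q \<le> 1 - (\<Sum>i\<in>S. min (pmf P i) (pmf Q i))"
proof -
  define m where "m i = min (pmf P i) (pmf Q i)" for i
  define \<mu> where "\<mu> = sum m S"
  have sP: "sum (pmf P) S = 1"
  proof -
    have "set_pmf P \<subseteq> S" using PS set_pmf_iff[of _ P] by blast
    then show ?thesis using measure_pmf_finite_supp[OF S, of P UNIV] by simp
  qed
  have sQ: "sum (pmf Q) S = 1"
  proof -
    have "set_pmf Q \<subseteq> S" using QS set_pmf_iff[of _ Q] by blast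
    then show ?thesis using measure_pmf_finite_supp[OF S, of Q UNIV] by simp
  qed
  have sPm: "(\<Sum>i\<in>S. pmf P i - m i) = 1 - \<mu>" using sP by (simp add: sum_subtractf \<mu>_def)
  have sQm: "(\<Sum>i\<in>S. pmf Q i - m i) = 1 - \<mu>" using sQ by (simp add: sum_subtractf \<mu>_def)
  have mle: "m i \<le> pmf P i" "m i \<le> pmf Q i" for i by (auto simp: m_def)
  have \<mu>le: "\<mu> \<le> 1" using sPm sum_nonneg[of S "\<lambda>i. pmf P i - m i"] mle by auto
  define f where "f z = (if fst z = snd z then m (fst z) else 0)
      + (pmf P (fst z) - m (fst z)) * (pmf Q (snd z) - m (snd z)) / (1 - \<mu>)" for z
  have fnn: "f z \<ge> 0" for z
    using mle \<mu>le by (auto simp: f_def m_def intro!: add_nonneg_nonneg divide_nonneg_nonneg mult_nonneg_nonneg)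
  have fout: "f z = 0" if "z \<notin> S \<times> S" for z
  proof -
    obtain a b where z: "z = (a, b)" by force
    have "a \<notin> S \<or> b \<notin> S" using that z by auto
    then show ?thesis using PS QS z by (auto simp: f_def m_def)
  qed
  have rowsum: "(\<Sum>j\<in>S. f (i, j)) = (if i \<in> S then m i else 0) + (pmf P i - m i)" for i
  proof -
    have "(\<Sum>j\<in>S. f (i, j)) = (\<Sum>j\<in>S. if i = j then m i else 0)
       + (pmf P i - m i) * (\<Sum>j\<in>S. pmf Q j - m j) / (1 - \<mu>)"
      by (simp add: f_def sum.distrib sum_distrib_left sum_divide_distrib cong: if_cong)
    also have "\<dots> = (if i \<in> S then m i else 0) + (pmf P i - m i)"
    proof (cases "\<mu> = 1")
      case True
      have "pmf P i - m i = 0"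
      proof (cases "i \<in> S")
        case True
        have "(\<Sum>i\<in>S. pmf P i - m i) = 0" using sPm \<open>\<mu> = 1\<close> by simp
        then show ?thesis using sum_nonneg_eq_0_iff[OF S, of "\<lambda>i. pmf P i - m i"] mle True by auto
      qed (use PS m_def in auto)
      then show ?thesis using S by (simp add: sum.delta)
    next
      case False
      then show ?thesis using S sQm by (simp add: sum.delta)
    qed
    finally show ?thesis .
  qed
  have colsum: "(\<Sum>i\<in>S. f (i, j)) = (if j \<in> S then m j else 0) + (pmf Q j - m j)" for j
  proof -
    have "(\<Sum>i\<in>S. f (i, j)) = (\<Sum>i\<in>S. if i = j then m j else 0)
       + (\<Sum>i\<in>S. pmf P i - m i) * (pmf Q j - m j) / (1 - \<mu>)"
      by (simp add: f_def sum.distrib sum_distrib_right sum_divide_distrib cong: if_cong)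
    also have "\<dots> = (if j \<in> S then m j else 0) + (pmf Q j - m j)"
    proof (cases "\<mu> = 1")
      case True
      have "pmf Q j - m j = 0"
      proof (cases "j \<in> S")
        case True
        have "(\<Sum>i\<in>S. pmf Q i - m i) = 0" using sQm \<open>\<mu> = 1\<close> by simp
        then show ?thesis using sum_nonneg_eq_0_iff[OF S, of "\<lambda>i. pmf Q i - m i"] mle True by auto
      qed (use QS m_def in auto)
      then show ?thesis using S by (simp add: sum.delta)
    next
      case False
      then show ?thesis using S sPm by (simp add: sum.delta)
    qed
    finally show ?thesis .
  qed
  have rowsum': "(\<Sum>j\<in>S. f (i, j)) = pmf P i" for i
    using rowsum[of i] PS[of i] by (auto simp: m_def)
  have colsum': "(\<Sum>i\<in>S. f (i, j)) = pmf Q j" for j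
    using colsum[of j] QS[of j] by (auto simp: m_def)
  have SS: "finite (S \<times> S)" using S by simp
  have ftot: "sum f (S \<times> S) = 1"
  proof -
    have "sum f (S \<times> S) = (\<Sum>i\<in>S. \<Sum>j\<in>S. f (i, j))"
      by (simp add: sum.cartesian_product)
    then show ?thesis using sP by (simp add: rowsum')
  qed
  define D where "D = embed_pmf f"
  have pD: "pmf D z = f z" for z unfolding D_def by (rule pmf_embed_finite[OF SS fnn fout ftot])
  have setD: "set_pmf D \<subseteq> S \<times> S" proof
    fix z assume "z \<in> set_pmf D"
    then have "f z \<noteq> 0" using pD set_pmf_iff by metis
    then show "z \<in> S \<times> S" using fout by blast
  qed
  have m1: "map_pmf fst D = P"
  proof (rule pmf_eqI)
    fix i
    have "pmf (map_pmf fst D) i = sum (pmf D) ((fst -` {i}) \<inter> (S \<times> S))"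
      by (simp add: pmf_map measure_pmf_finite_supp[OF SS setD])
    also have "\<dots> = (if i \<in> S then (\<Sum>j\<in>S. f (i, j)) else 0)"
    proof (cases "i \<in> S")
      case True
      have "(fst -` {i}) \<inter> (S \<times> S) = Pair i ` S" using True by auto
      then show ?thesis using True by (simp add: sum.reindex inj_on_def pD)
    next
      case False
      then have "(fst -` {i}) \<inter> (S \<times> S) = {}" by auto
      then show ?thesis using False by simp
    qed
    also have "\<dots> = pmf P i" using rowsum' PS by auto
    finally show "pmf (map_pmf fst D) i = pmf P i" .
  qed
  have m2: "map_pmf snd D = Q"
  proof (rule pmf_eqI)
    fix j
    have "pmf (map_pmf snd D) j = sum (pmf D) ((snd -` {j}) \<inter> (S \<times> S))"
      by (simp add: pmf_map measure_pmf_finite_supp[OF SS setD])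
    also have "\<dots> = (if j \<in> S then (\<Sum>i\<in>S. f (i, j)) else 0)"
    proof (cases "j \<in> S")
      case True
      have "(snd -` {j}) \<inter> (S \<times> S) = (\<lambda>i. (i, j)) ` S" using True by auto
      then show ?thesis using True by (simp add: sum.reindex inj_on_def pD)
    next
      case False
      then have "(snd -` {j}) \<inter> (S \<times> S) = {}" by auto
      then show ?thesis using False by simp
    qed
    also have "\<dots> = pmf Q j" using colsum' QS by auto
    finally show "pmf (map_pmf snd D) j = pmf Q j" .
  qed
  define g where "g z = (pmf P (fst z) - m (fst z)) * (pmf Q (snd z) - m (snd z)) / (1 - \<mu>)" for z
  have "measure_pmf.prob D {z. fst z \<noteq> snd z} = sum f ({z. fst z \<noteq> snd z} \<inter> (S \<times> S))"
    by (simp add: measure_pmf_finite_supp[OF SS setD] pD)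
  also have "\<dots> = sum g ({z. fst z \<noteq> snd z} \<inter> (S \<times> S))"
    by (rule sum.cong) (auto simp: f_def g_def)
  also have "\<dots> \<le> sum g (S \<times> S)"
    by (rule sum_mono2[OF SS]) (use mle \<mu>le in \<open>auto simp: g_def intro!: divide_nonneg_nonneg mult_nonneg_nonneg\<close>)
  also have "\<dots> = (\<Sum>i\<in>S. \<Sum>j\<in>S. g (i, j))"
    by (simp add: sum.cartesian_product)
  also have "\<dots> = (\<Sum>i\<in>S. (pmf P i - m i) * (\<Sum>j\<in>S. pmf Q j - m j) / (1 - \<mu>))"
    by (simp add: g_def sum_distrib_left sum_divide_distrib)
  also have "\<dots> = (\<Sum>i\<in>S. pmf P i - m i) * (\<Sum>j\<in>S. pmf Q j - m j) / (1 - \<mu>)"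
    by (simp add: sum_distrib_right sum_divide_distrib)
  also have "\<dots> = 1 - \<mu>" using sPm sQm by (cases "\<mu> = 1") (auto simp: power2_eq_square)
  finally have pr: "measure_pmf.prob D {z. fst z \<noteq> snd z} \<le> 1 - \<mu>" .
  have "TV P Q \<le> measure_pmf.prob D {z. fst z \<noteq> snd z}"
    unfolding TV_def
    by (rule cInf_lower) (use m1 m2 in \<open>auto intro!: bdd_belowI[where m=0]\<close>)
  then show ?thesis using pr by (simp add: \<mu>_def m_def)
qed


lemma den_pos: fixes x :: "nat \<Rightarrow> real" and c :: real shows "p \<ge> 1 \<Longrightarrow> (\<Sum>j\<in>{1..p}. exp (c * x j)) > 0"
  using sum_pos[of "{1..p}" "\<lambda>j. exp (c * x j)"] by auto

lemma softmax_sum: "p \<ge> 1 \<Longrightarrow> (\<Sum>i\<in>{1..p}. softmax_prob p x c i) = 1"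
  using den_pos[of p c x] by (simp add: softmax_prob_def sum_divide_distrib[symmetric])

lemma softmax_nonneg: "softmax_prob p x c i \<ge> 0"
  unfolding softmax_prob_def by (intro divide_nonneg_nonneg sum_nonneg) auto

lemma softmax_cont: "p \<ge> 1 \<Longrightarrow> continuous_on S (\<lambda>c. softmax_prob p x c i)"
  unfolding softmax_prob_def
  by (intro continuous_intros) (use den_pos[of p _ x] in \<open>auto simp: less_imp_neq[symmetric]\<close>)

lemma softmax_int: "p \<ge> 1 \<Longrightarrow> (\<lambda>c. softmax_prob p x c i) integrable_on {a..b}"
  by (intro integrable_continuous_interval softmax_cont)

lemma softmax_shift:
  assumes p: "p \<ge> 1" and c: "c \<ge> 0" and h: "\<forall>j\<in>{1..p}. x j \<le> x' j \<and> x' j \<le> x j + \<delta>"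
    and i: "i \<in> {1..p}"
  shows "softmax_prob p x' c i \<ge> (1 - c * \<delta>) * softmax_prob p x c i"
proof -
  define D where "D = (\<Sum>j\<in>{1..p}. exp (c * x j))"
  define D' where "D' = (\<Sum>j\<in>{1..p}. exp (c * x' j))"
  have Dp: "D > 0" "D' > 0" using den_pos[OF p] by (auto simp: D_def D'_def)
  have "D' \<le> (\<Sum>j\<in>{1..p}. exp (c * \<delta>) * exp (c * x j))"
    unfolding D'_def
  proof (rule sum_mono)
    fix j assume "j \<in> {1..p}"
    then have "c * x' j \<le> c * \<delta> + c * x j" using h c
      by (metis add.commute distrib_left mult_left_mono)
    then show "exp (c * x' j) \<le> exp (c * \<delta>) * exp (c * x j)" by (simp add: exp_add[symmetric])
  qed
  then have DD: "D' \<le> exp (c * \<delta>) * D" by (simp add: D_def sum_distrib_left)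
  have num: "exp (c * x i) \<le> exp (c * x' i)" using h i c by (simp add: mult_left_mono)
  have "exp (- (c * \<delta>)) * softmax_prob p x c i = exp (c * x i) / (exp (c * \<delta>) * D)"
    by (simp add: softmax_prob_def D_def exp_minus field_simps)
  also have "\<dots> \<le> exp (c * x' i) / D'"
    using DD num Dp by (intro frac_le) auto
  also have "\<dots> = softmax_prob p x' c i" by (simp add: softmax_prob_def D'_def)
  finally have 1: "exp (- (c * \<delta>)) * softmax_prob p x c i \<le> softmax_prob p x' c i" .
  have "(1 - c * \<delta>) * softmax_prob p x c i \<le> exp (- (c * \<delta>)) * softmax_prob p x c i"
    using exp_ge_add_one_self[of "- (c * \<delta>)"] softmax_nonneg[of p x c i]
    by (intro mult_right_mono) auto
  with 1 show ?thesis by linarith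
qed

lemma pmf_softargmax:
  assumes p: "p \<ge> 1" and M: "Max (x ` {1..p}) \<noteq> 0" and a: "sam_lo p \<epsilon> x > 0"
  shows "pmf (softargmax p \<epsilon> x) i = (if i \<in> {1..p} then
     (1 / sam_lo p \<epsilon> x) * integral {sam_lo p \<epsilon> x .. 2 * sam_lo p \<epsilon> x} (\<lambda>c. softmax_prob p x c i) else 0)"
proof -
  define a where "a = sam_lo p \<epsilon> x"
  define f where "f i = (if i \<in> {1..p} then
          (1 / (2 * a - a)) * integral {a .. 2 * a} (\<lambda>c. softmax_prob p x c i) else 0)" for i
  have f2: "f i = (if i \<in> {1..p} then
          (1 / a) * integral {a .. 2 * a} (\<lambda>c. softmax_prob p x c i) else 0)" for i
    by (simp add: f_def)
  have "softargmax p \<epsilon> x = embed_pmf f" using M unfolding softargmax_def f_def a_def by simp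
  moreover have "pmf (embed_pmf f) i = f i"
  proof (rule pmf_embed_finite[of "{1..p}"])
    show "f y \<ge> 0" for y using a unfolding f2 a_def
      by (auto intro!: divide_nonneg_nonneg integral_nonneg softmax_int p softmax_nonneg)
    show "y \<notin> {1..p} \<Longrightarrow> f y = 0" for y unfolding f_def by auto
    have "sum f {1..p} = (1 / a) * (\<Sum>i\<in>{1..p}. integral {a .. 2 * a} (\<lambda>c. softmax_prob p x c i))"
      by (simp add: f2 sum_distrib_left)
    also have "\<dots> = (1 / a) * integral {a .. 2 * a} (\<lambda>c. \<Sum>i\<in>{1..p}. softmax_prob p x c i)"
      by (subst integral_sum) (auto intro: softmax_int p)
    also have "\<dots> = 1" using a softmax_sum[OF p] by (simp add: a_def)
    finally show "sum f {1..p} = 1" .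
  qed simp
  ultimately show ?thesis by (simp add: f2 a_def)
qed


theorem mainTheorem9:
  fixes p :: nat and x x' :: "nat \<Rightarrow> real" and \<epsilon> \<delta> :: real
  assumes "p \<ge> 1"
    and "\<forall>i\<in>{1..p}. x i \<ge> 0"
    and "\<forall>i\<in>{1..p}. x' i \<ge> 0"
    and "0 < \<epsilon>" and "\<epsilon> \<le> 1"
    and "\<delta> > 0"
    and "\<delta> \<le> Max (x ` {1..p}) / (4 * inverse \<epsilon> * ln (2 * real p * inverse \<epsilon>))"
    and "\<forall>i\<in>{1..p}. x i \<le> x' i \<and> x' i \<le> x i + \<delta>"
  shows "TV (softargmax p \<epsilon> x) (softargmax p \<epsilon> x')
           \<le> 10 * inverse \<epsilon> * ln (2 * real p * inverse \<epsilon>) * \<delta> / Max (x ` {1..p})"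
proof -
  note p = assms(1) and h = assms(8)
  define L where "L = inverse \<epsilon> * ln (2 * real p * inverse \<epsilon>)"
  define M where "M = Max (x ` {1..p})"
  define M' where "M' = Max (x' ` {1..p})"
  have ne: "{1..p} \<noteq> {}" using p by auto
  have inv1: "inverse \<epsilon> \<ge> 1" using assms(4,5) by (simp add: one_le_inverse)
  have "real p * inverse \<epsilon> \<ge> 1 * 1" using p inv1 by (intro mult_mono) auto
  then have ge2: "2 * real p * inverse \<epsilon> \<ge> 2" by linarith
  have "ln 2 \<le> ln (2 * real p * inverse \<epsilon>)" by (rule ln_le_cancel_iff[THEN iffD2]) (use ge2 in linarith)+
  then have lnge: "ln (2 * real p * inverse \<epsilon>) \<ge> 2/3" using ln2_ge_two_thirds by linarith
  have "L \<ge> 1 * (2/3)" unfolding L_def using inv1 lnge assms(4) by (intro mult_mono) auto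
  then have L3: "L \<ge> 2/3" by simp
  have Lpos: "L > 0" using L3 by linarith
  have dM: "\<delta> \<le> M / (4 * L)" using assms(7) by (simp add: M_def L_def mult.assoc)
  have "0 < M / (4 * L)" using assms(6) dM by linarith
  then have Mpos: "M > 0" using Lpos by (simp add: zero_less_divide_iff)
  have d4: "4 * L * \<delta> \<le> M" using dM Lpos by (simp add: field_simps)
  have MM': "M \<le> M'"
  proof -
    have "M \<in> x ` {1..p}" unfolding M_def by (rule Max_in) (use ne in auto)
    then obtain i where i: "i \<in> {1..p}" "x i = M" by auto
    then have "x' i \<le> M'" unfolding M'_def by (intro Max_ge) auto
    then show ?thesis using h i by force
  qed
  have M'M: "M' \<le> M + \<delta>"
    unfolding M'_def
  proof (rule Max.boundedI)
    show "finite (x' ` {1..p})" by simp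
    show "x' ` {1..p} \<noteq> {}" using ne by simp
    fix y assume "y \<in> x' ` {1..p}"
    then obtain i where i: "i \<in> {1..p}" and y: "y = x' i" by auto
    have "x i \<le> M" unfolding M_def using i by (intro Max_ge) auto
    then show "y \<le> M + \<delta>" using h i y by force
  qed
  define a where "a = sam_lo p \<epsilon> x"
  define a' where "a' = sam_lo p \<epsilon> x'"
  have a_eq: "a = 2 * L / M" by (simp add: a_def sam_lo_def L_def M_def mult.assoc)
  have a'_eq: "a' = 2 * L / M'" by (simp add: a'_def sam_lo_def L_def M'_def mult.assoc)
  have M'pos: "M' > 0" using Mpos MM' by linarith
  have apos: "a > 0" and a'pos: "a' > 0" using Lpos Mpos M'pos by (auto simp: a_eq a'_eq)
  have a'a: "a' \<le> a" unfolding a_eq a'_eq using Lpos Mpos MM' by (intro divide_left_mono) auto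
  have "\<delta> * 1 \<le> \<delta> * (4 * L)" using L3 assms(6) by (intro mult_left_mono) auto
  then have "M' \<le> 2 * M" using M'M d4 by (simp add: mult.commute mult.left_commute)
  then have aa': "a \<le> 2 * a'" unfolding a_eq a'_eq using Lpos Mpos M'pos by (simp add: field_simps)
  have ad: "2 * a * \<delta> \<le> 1" using d4 Mpos by (simp add: a_eq field_simps)
  have ad0: "2 * a * \<delta> \<ge> 0" using apos assms(6) by simp
  define s where "s y c i = softmax_prob p y c i" for y c i
  define I where "I i = integral {a..2*a'} (\<lambda>c. s x c i)" for i
  note int = softmax_int[OF p]
  have Inn: "I i \<ge> 0" for i unfolding I_def s_def by (intro integral_nonneg int softmax_nonneg)
  have pP: "pmf (softargmax p \<epsilon> x) i = (if i \<in> {1..p} then (1/a) * integral {a..2*a} (\<lambda>c. s x c i) else 0)" for i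
    using pmf_softargmax[OF p, of x \<epsilon> i] Mpos apos by (simp add: a_def M_def s_def)
  have pP': "pmf (softargmax p \<epsilon> x') i = (if i \<in> {1..p} then (1/a') * integral {a'..2*a'} (\<lambda>c. s x' c i) else 0)" for i
    using pmf_softargmax[OF p, of x' \<epsilon> i] M'pos a'pos by (simp add: a'_def M'_def s_def)
  have lowP: "pmf (softargmax p \<epsilon> x) i \<ge> (1 - 2*a*\<delta>) * I i / a" if i: "i \<in> {1..p}" for i
  proof -
    have "integral {a..2*a'} (\<lambda>c. s x c i) + integral {2*a'..2*a} (\<lambda>c. s x c i) = integral {a..2*a} (\<lambda>c. s x c i)"
      unfolding s_def by (rule Henstock_Kurzweil_Integration.integral_combine) (use aa' a'a apos in \<open>auto intro: int\<close>)
    moreover have "integral {2*a'..2*a} (\<lambda>c. s x c i) \<ge> 0" unfolding s_def by (intro integral_nonneg int softmax_nonneg)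
    ultimately have "I i \<le> integral {a..2*a} (\<lambda>c. s x c i)" unfolding I_def by linarith
    moreover have "(1 - 2*a*\<delta>) * I i \<le> I i" using mult_right_mono[of "1 - 2*a*\<delta>" 1 "I i"] Inn[of i] ad0 by simp
    ultimately show ?thesis using i pP[of i] apos by (simp add: divide_right_mono)
  qed
  have lowP': "pmf (softargmax p \<epsilon> x') i \<ge> (1 - 2*a*\<delta>) * I i / a" if i: "i \<in> {1..p}" for i
  proof -
    have "integral {a'..a} (\<lambda>c. s x' c i) + integral {a..2*a'} (\<lambda>c. s x' c i) = integral {a'..2*a'} (\<lambda>c. s x' c i)"
      unfolding s_def by (rule Henstock_Kurzweil_Integration.integral_combine) (use aa' a'a apos in \<open>auto intro: int\<close>)
    moreover have "integral {a'..a} (\<lambda>c. s x' c i) \<ge> 0" unfolding s_def by (intro integral_nonneg int softmax_nonneg)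
    ultimately have 1: "integral {a..2*a'} (\<lambda>c. s x' c i) \<le> integral {a'..2*a'} (\<lambda>c. s x' c i)" by linarith
    have "(1 - 2*a*\<delta>) * I i = integral {a..2*a'} (\<lambda>c. (1 - 2*a*\<delta>) * s x c i)"
      unfolding I_def s_def by simp
    also have "\<dots> \<le> integral {a..2*a'} (\<lambda>c. s x' c i)"
    proof (rule integral_le)
      show "(\<lambda>c. (1 - 2*a*\<delta>) * s x c i) integrable_on {a..2*a'}" unfolding s_def
        by (intro integrable_on_mult_right int)
      show "(\<lambda>c. s x' c i) integrable_on {a..2*a'}" unfolding s_def by (intro int)
      fix c assume c: "c \<in> {a..2*a'}"
      then have c0: "c \<ge> 0" "c \<le> 2 * a" using apos a'a by auto
      have "(1 - 2*a*\<delta>) * s x c i \<le> (1 - c * \<delta>) * s x c i"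
        using c0 assms(6) softmax_nonneg[of p x c i] by (intro mult_right_mono) (auto simp: s_def mult_right_mono)
      also have "\<dots> \<le> s x' c i" unfolding s_def by (rule softmax_shift[OF p c0(1) h i])
      finally show "(1 - 2*a*\<delta>) * s x c i \<le> s x' c i" .
    qed
    finally have 2: "(1 - 2*a*\<delta>) * I i \<le> integral {a'..2*a'} (\<lambda>c. s x' c i)" using 1 by linarith
    have "(1 - 2*a*\<delta>) * I i / a \<le> (1 - 2*a*\<delta>) * I i / a'"
      using a'a a'pos Inn[of i] ad by (intro divide_left_mono) auto
    also have "\<dots> \<le> integral {a'..2*a'} (\<lambda>c. s x' c i) / a'" using 2 a'pos by (simp add: divide_right_mono)
    finally show ?thesis using pP'[of i] i by simp
  qed
  have sumI: "(\<Sum>i\<in>{1..p}. I i) = 2*a' - a"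
  proof -
    have "(\<Sum>i\<in>{1..p}. I i) = integral {a..2*a'} (\<lambda>c. \<Sum>i\<in>{1..p}. s x c i)"
      unfolding I_def s_def by (subst integral_sum) (auto intro: int)
    also have "\<dots> = 2*a' - a" using softmax_sum[OF p] aa' by (simp add: s_def)
    finally show ?thesis .
  qed
  have "TV (softargmax p \<epsilon> x) (softargmax p \<epsilon> x')
      \<le> 1 - (\<Sum>i\<in>{1..p}. min (pmf (softargmax p \<epsilon> x) i) (pmf (softargmax p \<epsilon> x') i))"
    by (rule TV_le_coupling) (auto simp: pP pP')
  also have "\<dots> \<le> 1 - (\<Sum>i\<in>{1..p}. (1 - 2*a*\<delta>) * I i / a)"
  proof -
    have "(\<Sum>i\<in>{1..p}. (1 - 2*a*\<delta>) * I i / a) \<le> (\<Sum>i\<in>{1..p}. min (pmf (softargmax p \<epsilon> x) i) (pmf (softargmax p \<epsilon> x') i))"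
      by (rule sum_mono) (use lowP lowP' in auto)
    then show ?thesis by linarith
  qed
  also have "\<dots> = 1 - (1 - 2*a*\<delta>) * (\<Sum>i\<in>{1..p}. I i) / a"
    by (simp add: sum_divide_distrib sum_distrib_left)
  also have "\<dots> = 1 - (1 - 2*a*\<delta>) * ((2*a' - a) / a)"
    unfolding sumI by simp
  also have "\<dots> \<le> 10 * L * \<delta> / M"
  proof -
    define t where "t = 4 * L * \<delta> / M"
    define u where "u = \<delta> / M"
    have t: "2*a*\<delta> = t" by (simp add: t_def a_eq)
    have r: "(2*a' - a) / a = 2 * M / M' - 1" using Lpos Mpos M'pos by (simp add: a_eq a'_eq field_simps)
    have "2 * M / M' \<ge> 2 * M / (M + \<delta>)" using Mpos M'pos M'M by (intro divide_left_mono) auto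
    moreover have "2 * M / (M + \<delta>) \<ge> 2 - 2 * u"
      using Mpos assms(6) by (simp add: u_def field_simps)
    ultimately have r1: "2 * M / M' - 1 \<ge> 1 - 2 * u" by linarith
    have t1: "0 \<le> 1 - t" using ad t by linarith
    have u0: "u \<ge> 0" using Mpos assms(6) by (simp add: u_def)
    have "(1 - t) * (1 - 2 * u) \<le> (1 - t) * (2 * M / M' - 1)" using r1 t1 by (intro mult_left_mono)
    moreover have "(1 - t) * (1 - 2 * u) \<ge> 1 - t - 2 * u" using u0 t ad0 by (simp add: algebra_simps)
    moreover have "t + 2 * u \<le> 10 * L * \<delta> / M"
    proof -
      have "2 * u \<le> 6 * L * u" using L3 u0 by (simp add: mult_right_mono)
      moreover have "t = 4 * L * u" by (simp add: t_def u_def)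
      moreover have "10 * L * \<delta> / M = 10 * L * u" by (simp add: u_def)
      ultimately show ?thesis by linarith
    qed
    ultimately show ?thesis unfolding t r by linarith
  qed
  finally show ?thesis by (simp add: L_def M_def mult.assoc)
qed

end
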